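(* Let $T$ be sufficiently large and let $f:\mathbb{N}\to\mathbb{C}$ be completely multiplicative with $|f(n)|=1$ for all $n$. Let $2\le x\le\exp((\log T)^{1/2})$ and $y=\frac{\log T}{\log x\,(\log_2T)^8}$. Then there is a set of $t\in[0,T]$ of Lebesgue measure at least $T^{1-1/(\log_2T)^2}$ such that for all $t$ in this set $$\sum_{n\le x,\ n\in\mathcal{S}(y)}n^{\mathrm{i}t}=\sum_{n\le x,\ n\in\mathcal{S}(y)}f(n)+O\bigg(\frac{\Psi(x,y)}{(\log_2T)^2}\bigg).$$
   Context: $\log_2=\log\log$. $\mathcal{S}(y)$ is the set of positive integers all of whose prime factors are $\le y$, and $\Psi(x,y)=\#\{n\le x:n\in\mathcal{S}(y)\}$. *)

theory Defs
  imports "HOL-Analysis.Analysis" "HOL-Computational_Algebra.Primes"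
begin

definition smooth :: "real \<Rightarrow> nat set" where
  "smooth y = {n. n > 0 \<and> (\<forall>p\<in>prime_factors n. real p \<le> y)}"

definition Psi :: "real \<Rightarrow> real \<Rightarrow> nat" where
  "Psi x y = card {n. real n \<le> x \<and> n \<in> smooth y}"

definition completely_multiplicative :: "(nat \<Rightarrow> complex) \<Rightarrow> bool" where
  "completely_multiplicative f \<longleftrightarrow> f 1 = 1 \<and> (\<forall>m n. m > 0 \<longrightarrow> n > 0 \<longrightarrow> f (m * n) = f m * f n)"

definition nit :: "nat \<Rightarrow> real \<Rightarrow> complex" where
  "nit n t = exp (\<i> * of_real (t * ln (real n)))"

end

theory Submission
  imports Defs "HOL-Computational_Algebra.Polynomial" "HOL-Real_Asymp.Real_Asymp"
begin


definition ee :: "real \<Rightarrow> real \<Rightarrow> complex" where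
  "ee l t = exp (t *\<^sub>R (\<i> * of_real l))"

lemma ee_add: "ee a t * ee b t = ee (a + b) t"
  unfolding ee_def by (simp add: exp_add[symmetric] algebra_simps scaleR_conv_of_real)

lemma cnj_ee: "cnj (ee a t) = ee (-a) t"
  unfolding ee_def by (simp add: exp_cnj scaleR_conv_of_real)

lemma norm_ee [simp]: "norm (ee a t) = 1"
  unfolding ee_def by (simp add: scaleR_conv_of_real norm_exp_eq_Re)

lemma ee_zero [simp]: "ee 0 t = 1"
  unfolding ee_def by simp

lemma ee_t0 [simp]: "ee l 0 = 1"
  unfolding ee_def by simp

lemma continuous_on_ee [continuous_intros]: "continuous_on S (ee l)"
  unfolding ee_def by (intro continuous_intros)

lemma ee_has_integral:
  assumes "l \<noteq> 0" "0 \<le> T"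
  shows "(ee l has_integral ((ee l T - 1) / (\<i> * of_real l))) {0..T}"
proof -
  have d: "((\<lambda>t. ee l t / (\<i> * of_real l)) has_vector_derivative ee l t) (at t within {0..T})" for t
  proof -
    have "((\<lambda>t. ee l t) has_vector_derivative ee l t * (\<i> * of_real l)) (at t within {0..T})"
      unfolding ee_def by (rule exp_scaleR_has_vector_derivative_right)
    then have "((\<lambda>t. ee l t / (\<i> * of_real l)) has_vector_derivative (ee l t * (\<i> * of_real l)) / (\<i> * of_real l)) (at t within {0..T})"
      by (intro has_vector_derivative_divide) 
    then show ?thesis using assms by simp
  qed
  have "(ee l has_integral (ee l T / (\<i> * of_real l) - ee l 0 / (\<i> * of_real l))) {0..T}"
    by (rule fundamental_theorem_of_calculus[OF assms(2)]) (use d in \<open>auto simp: has_real_derivative_iff_has_vector_derivative\<close>)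
  then show ?thesis by (simp add: diff_divide_distrib)
qed

lemma ee_integral_bound:
  assumes "l \<noteq> 0" "0 \<le> T"
  shows "norm (integral {0..T} (ee l)) \<le> 2 / \<bar>l\<bar>"
proof -
  have "integral {0..T} (ee l) = (ee l T - 1) / (\<i> * of_real l)"
    using ee_has_integral[OF assms] by (rule integral_unique)
  also have "norm \<dots> = norm (ee l T - 1) / \<bar>l\<bar>"
    by (simp add: norm_divide norm_mult)
  also have "\<dots> \<le> 2 / \<bar>l\<bar>"
  proof -
    have "norm (ee l T - 1) \<le> norm (ee l T) + norm (1::complex)" by (rule norm_triangle_ineq4)
    then show ?thesis using assms by (simp add: divide_right_mono)
  qed
  finally show ?thesis .
qed

lemma ee_integral0: "0 \<le> T \<Longrightarrow> integral {0..T} (ee 0) = of_real T"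
proof -
  assume "0 \<le> T"
  have "ee 0 = (\<lambda>_. 1)" by (rule ext) simp
  then show ?thesis using \<open>0 \<le> T\<close> by (simp add: scaleR_conv_of_real)
qed



lemma norm_sq_sum_ee:
  fixes V :: "'a set"
  shows "(cmod (\<Sum>v\<in>V. c v * ee (lam v) t))\<^sup>2 =
         Re (\<Sum>v\<in>V. \<Sum>w\<in>V. (c v * cnj (c w)) * ee (lam v - lam w) t)"
proof -
  let ?F = "\<Sum>v\<in>V. c v * ee (lam v) t"
  have "complex_of_real ((cmod ?F)\<^sup>2) = ?F * cnj ?F" by (rule complex_norm_square)
  also have "\<dots> = (\<Sum>v\<in>V. \<Sum>w\<in>V. (c v * ee (lam v) t) * (cnj (c w) * ee (- lam w) t))"
    by (simp add: sum_product cnj_ee)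
  also have "\<dots> = (\<Sum>v\<in>V. \<Sum>w\<in>V. (c v * cnj (c w)) * ee (lam v - lam w) t)"
  proof (intro sum.cong refl)
    fix v w
    have "(c v * ee (lam v) t) * (cnj (c w) * ee (- lam w) t) = (c v * cnj (c w)) * (ee (lam v) t * ee (- lam w) t)"
      by (simp add: algebra_simps)
    also have "\<dots> = (c v * cnj (c w)) * ee (lam v - lam w) t" by (simp add: ee_add)
    finally show "(c v * ee (lam v) t) * (cnj (c w) * ee (- lam w) t) = (c v * cnj (c w)) * ee (lam v - lam w) t" .
  qed
  finally have "complex_of_real ((cmod ?F)\<^sup>2) = (\<Sum>v\<in>V. \<Sum>w\<in>V. (c v * cnj (c w)) * ee (lam v - lam w) t)" .
  then show ?thesis by (metis Re_complex_of_real)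
qed

lemma mean_value:
  fixes V :: "'a set" and c :: "'a \<Rightarrow> complex" and lam :: "'a \<Rightarrow> real"
  assumes fin: "finite V" and T: "0 \<le> T" and g: "g > 0"
    and gap: "\<And>v w. v \<in> V \<Longrightarrow> w \<in> V \<Longrightarrow> v \<noteq> w \<Longrightarrow> g \<le> \<bar>lam v - lam w\<bar>"
  shows "((\<lambda>t. (cmod (\<Sum>v\<in>V. c v * ee (lam v) t))\<^sup>2) has_integral
           Re (\<Sum>v\<in>V. \<Sum>w\<in>V. (c v * cnj (c w)) * integral {0..T} (ee (lam v - lam w)))) {0..T}"
    and "\<bar>Re (\<Sum>v\<in>V. \<Sum>w\<in>V. (c v * cnj (c w)) * integral {0..T} (ee (lam v - lam w)))
            - T * (\<Sum>v\<in>V. (cmod (c v))\<^sup>2)\<bar> \<le> 2 * (\<Sum>v\<in>V. cmod (c v))\<^sup>2 / g"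
proof -
  let ?I = "\<lambda>v w. integral {0..T} (ee (lam v - lam w))"
  have hi: "(ee l has_integral integral {0..T} (ee l)) {0..T}" for l
    by (intro integrable_integral integrable_continuous_interval continuous_on_ee)
  have "((\<lambda>t. \<Sum>v\<in>V. \<Sum>w\<in>V. (c v * cnj (c w)) * ee (lam v - lam w) t) has_integral
           (\<Sum>v\<in>V. \<Sum>w\<in>V. (c v * cnj (c w)) * ?I v w)) {0..T}"
    by (intro has_integral_sum fin has_integral_mult_right hi)
  from has_integral_linear[OF this bounded_linear_Re]
  show "((\<lambda>t. (cmod (\<Sum>v\<in>V. c v * ee (lam v) t))\<^sup>2) has_integral
           Re (\<Sum>v\<in>V. \<Sum>w\<in>V. (c v * cnj (c w)) * ?I v w)) {0..T}"
    by (simp add: o_def norm_sq_sum_ee del: sum_mult_sum_if_inj)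
  have split: "(\<Sum>v\<in>V. \<Sum>w\<in>V. (c v * cnj (c w)) * ?I v w) =
      (\<Sum>v\<in>V. (c v * cnj (c v)) * of_real T) + (\<Sum>v\<in>V. \<Sum>w\<in>V-{v}. (c v * cnj (c w)) * ?I v w)"
  proof -
    have "(\<Sum>v\<in>V. \<Sum>w\<in>V. (c v * cnj (c w)) * ?I v w) =
       (\<Sum>v\<in>V. (c v * cnj (c v)) * ?I v v + (\<Sum>w\<in>V-{v}. (c v * cnj (c w)) * ?I v w))"
      by (intro sum.cong refl) (simp add: fin sum.remove)
    then show ?thesis using T by (simp add: sum.distrib ee_integral0)
  qed
  have diag: "Re (\<Sum>v\<in>V. (c v * cnj (c v)) * of_real T) = T * (\<Sum>v\<in>V. (cmod (c v))\<^sup>2)"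
  proof -
    have e: "(c v * cnj (c v)) * of_real T = of_real (T * (cmod (c v))\<^sup>2)" for v
      by (simp add: complex_norm_square[symmetric] mult.commute)
    show ?thesis by (simp only: e Re_sum Re_complex_of_real sum_distrib_left)
  qed
  have off: "cmod (\<Sum>v\<in>V. \<Sum>w\<in>V-{v}. (c v * cnj (c w)) * ?I v w) \<le> 2 * (\<Sum>v\<in>V. cmod (c v))\<^sup>2 / g"
  proof -
    have "cmod (\<Sum>v\<in>V. \<Sum>w\<in>V-{v}. (c v * cnj (c w)) * ?I v w) \<le>
          (\<Sum>v\<in>V. \<Sum>w\<in>V-{v}. cmod (c v) * cmod (c w) * (2 / g))"
    proof -
      have "cmod (\<Sum>v\<in>V. \<Sum>w\<in>V-{v}. (c v * cnj (c w)) * ?I v w) \<le>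
          (\<Sum>v\<in>V. \<Sum>w\<in>V-{v}. cmod ((c v * cnj (c w)) * ?I v w))"
        by (rule order.trans[OF norm_sum sum_mono]) (rule norm_sum)
      also have "\<dots> \<le> (\<Sum>v\<in>V. \<Sum>w\<in>V-{v}. cmod (c v) * cmod (c w) * (2 / g))"
      proof (intro sum_mono)
        fix v w assume v: "v \<in> V" and w: "w \<in> V - {v}"
        have gl: "g \<le> \<bar>lam v - lam w\<bar>" using gap v w by auto
        then have ne: "lam v - lam w \<noteq> 0" using g by auto
        have "cmod (?I v w) \<le> 2 / \<bar>lam v - lam w\<bar>" by (rule ee_integral_bound[OF ne T])
        also have "\<dots> \<le> 2 / g" using gl g by (intro divide_left_mono) auto
        finally have Ib: "cmod (?I v w) \<le> 2 / g" .
        show "cmod ((c v * cnj (c w)) * ?I v w) \<le> cmod (c v) * cmod (c w) * (2 / g)"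
          using mult_left_mono[OF Ib, of "cmod (c v) * cmod (c w)"] by (simp add: norm_mult)
      qed
      finally show ?thesis .
    qed
    also have "\<dots> \<le> (\<Sum>v\<in>V. \<Sum>w\<in>V. cmod (c v) * cmod (c w) * (2 / g))"
      using g by (intro sum_mono sum_mono2 fin) auto
    also have "\<dots> = 2 * (\<Sum>v\<in>V. cmod (c v))\<^sup>2 / g"
      by (simp add: power2_eq_square sum_distrib_left sum_distrib_right sum_divide_distrib mult_ac)
    finally show ?thesis .
  qed
  show "\<bar>Re (\<Sum>v\<in>V. \<Sum>w\<in>V. (c v * cnj (c w)) * ?I v w) - T * (\<Sum>v\<in>V. (cmod (c v))\<^sup>2)\<bar>
        \<le> 2 * (\<Sum>v\<in>V. cmod (c v))\<^sup>2 / g"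
  proof -
    have "Re (\<Sum>v\<in>V. \<Sum>w\<in>V. (c v * cnj (c w)) * ?I v w) = Re (\<Sum>v\<in>V. (c v * cnj (c v)) * of_real T)
       + Re (\<Sum>v\<in>V. \<Sum>w\<in>V-{v}. (c v * cnj (c w)) * ?I v w)"
      by (simp only: split plus_complex.sel)
    then show ?thesis
      using off abs_Re_le_cmod[of "\<Sum>v\<in>V. \<Sum>w\<in>V-{v}. (c v * cnj (c w)) * ?I v w"] diag
      by linarith
  qed
qed



lemma Nats_sum': "(\<And>x. x \<in> A \<Longrightarrow> f x \<in> \<nat>) \<Longrightarrow> sum f A \<in> \<nat>"
  by (induct A rule: infinite_finite_induct) auto

definition Ak :: "nat \<Rightarrow> complex poly" where
  "Ak N = (\<Sum>j\<le>N. monom 1 j)"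

definition kb :: "nat \<Rightarrow> nat \<Rightarrow> nat \<Rightarrow> complex" where
  "kb N r s = coeff (Ak N ^ r) s"

lemma kb_Nats: "kb N r s \<in> \<nat>"
  unfolding kb_def
proof (induct r arbitrary: s)
  case 0
  then show ?case by (simp add: coeff_1)
next
  case (Suc r)
  have "coeff (Ak N) i \<in> \<nat>" for i
    unfolding Ak_def coeff_sum by (intro Nats_sum') (simp add: coeff_monom)
  then show ?case
    by (simp add: coeff_mult Suc Nats_sum')
qed

lemma degree_Ak: "degree (Ak N) \<le> N"
  unfolding Ak_def by (intro degree_sum_le) (auto intro: order.trans[OF degree_monom_le])

lemma kb_expand:
  fixes w :: complex
  shows "(\<Sum>j\<le>N. w^j)^r = (\<Sum>s\<le>r*N. kb N r s * w^s)"
proof -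
  have "poly (Ak N) w = (\<Sum>j\<le>N. w^j)"
    unfolding Ak_def poly_sum by (simp add: poly_monom)
  then have "(\<Sum>j\<le>N. w^j)^r = poly (Ak N ^ r) w" by simp
  also have "\<dots> = (\<Sum>i\<le>degree (Ak N ^ r). coeff (Ak N ^ r) i * w ^ i)" by (rule poly_altdef)
  also have "\<dots> = (\<Sum>s\<le>r*N. kb N r s * w^s)"
  proof -
    have dg: "degree (Ak N ^ r) \<le> r * N"
      using degree_power_le[of "Ak N" r] degree_Ak[of N]
      by (metis dual_order.trans mult.commute mult_le_mono1)
    show ?thesis unfolding kb_def
      by (rule sum.mono_neutral_left) (use dg in \<open>auto simp: coeff_eq_0\<close>)
  qed
  finally show ?thesis .
qed

lemma kb_sum: "(\<Sum>s\<le>r*N. kb N r s) = of_nat ((N+1)^r)"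
  using kb_expand[of 1 N r] by simp

lemma norm_kb: "cmod (kb N r s) = Re (kb N r s)"
  using kb_Nats[of N r s] by (auto elim!: Nats_cases)

lemma kb_real: "kb N r s = of_real (cmod (kb N r s))"
  using kb_Nats[of N r s] by (auto elim!: Nats_cases)

lemma sum_norm_kb: "(\<Sum>s\<le>r*N. cmod (kb N r s)) = real ((N+1)^r)"
proof -
  have "(\<Sum>s\<le>r*N. cmod (kb N r s)) = Re (\<Sum>s\<le>r*N. kb N r s)" by (simp add: norm_kb Re_sum)
  then show ?thesis by (simp add: kb_sum)
qed

lemma cauchy_card:
  fixes a :: "'a \<Rightarrow> real"
  assumes "finite A"
  shows "(\<Sum>x\<in>A. a x)\<^sup>2 \<le> real (card A) * (\<Sum>x\<in>A. (a x)\<^sup>2)"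
proof -
  have "(\<Sum>x\<in>A. 1 * a x)\<^sup>2 \<le> (\<Sum>x\<in>A. 1\<^sup>2) * (\<Sum>x\<in>A. (a x)\<^sup>2)"
    by (rule Cauchy_Schwarz_ineq_sum)
  then show ?thesis by simp
qed

lemma sum_sq_kb: "real ((N+1)^(2*r)) / real (r*N+1) \<le> (\<Sum>s\<le>r*N. (cmod (kb N r s))\<^sup>2)"
proof -
  have "(real ((N+1)^r))\<^sup>2 \<le> real (card {..r*N}) * (\<Sum>s\<le>r*N. (cmod (kb N r s))\<^sup>2)"
    unfolding sum_norm_kb[symmetric] by (rule cauchy_card) simp
  moreover have "(real ((N+1)^r))\<^sup>2 = real ((N+1)^(2*r))"
    by (metis of_nat_power power_mult mult.commute)
  moreover have "real (card {..r*N}) = real (r*N+1)" by simp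
  ultimately have h: "real ((N+1)^(2*r)) \<le> (\<Sum>s\<le>r*N. (cmod (kb N r s))\<^sup>2) * real (r*N+1)"
    by (simp only: mult.commute)
  have pos: "0 < real (r*N+1)" by (simp only: of_nat_0_less_iff zero_less_Suc Suc_eq_plus1[symmetric])
  show ?thesis using h by (simp only: pos_divide_le_eq[OF pos])
qed



lemma nit_ee: "nit n t = ee (ln (real n)) t"
  unfolding nit_def ee_def by (simp add: scaleR_conv_of_real mult_ac)

lemma ee_pow: "ee l t ^ s = ee (real s * l) t"
  unfolding ee_def by (simp add: exp_of_nat_mult[symmetric] scaleR_conv_of_real mult_ac)

lemma prod_ee: "finite P \<Longrightarrow> (\<Prod>p\<in>P. ee (l p) t) = ee (\<Sum>p\<in>P. l p) t"
  by (induct P rule: finite_induct) (auto simp: ee_add)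

definition wp :: "(nat \<Rightarrow> complex) \<Rightarrow> nat \<Rightarrow> real \<Rightarrow> complex" where
  "wp f p t = nit p t * cnj (f p)"

definition Dp :: "(nat \<Rightarrow> complex) \<Rightarrow> nat \<Rightarrow> nat \<Rightarrow> nat set \<Rightarrow> real \<Rightarrow> complex" where
  "Dp f N r P t = (\<Prod>p\<in>P. (\<Sum>j\<le>N. (wp f p t)^j)^r)"

lemma D_expand:
  assumes "finite P"
  shows "Dp f N r P t = (\<Sum>v\<in>PiE P (\<lambda>_. {..r*N}).
      (\<Prod>p\<in>P. kb N r (v p) * cnj (f p)^(v p)) * ee (\<Sum>p\<in>P. real (v p) * ln (real p)) t)"
proof -
  have "Dp f N r P t = (\<Prod>p\<in>P. \<Sum>s\<in>{..r*N}. (kb N r s * cnj (f p)^s) * ee (real s * ln (real p)) t)"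
    unfolding Dp_def
  proof (intro prod.cong refl)
    fix p
    show "(\<Sum>j\<le>N. (wp f p t)^j)^r = (\<Sum>s\<in>{..r*N}. (kb N r s * cnj (f p)^s) * ee (real s * ln (real p)) t)"
      unfolding kb_expand wp_def nit_ee
      by (intro sum.cong refl) (simp add: power_mult_distrib ee_pow mult_ac)
  qed
  also have "\<dots> = (\<Sum>v\<in>PiE P (\<lambda>_. {..r*N}). \<Prod>p\<in>P. (kb N r (v p) * cnj (f p)^(v p)) * ee (real (v p) * ln (real p)) t)"
    by (rule prod_sum_PiE) (use assms in auto)
  also have "\<dots> = (\<Sum>v\<in>PiE P (\<lambda>_. {..r*N}).
      (\<Prod>p\<in>P. kb N r (v p) * cnj (f p)^(v p)) * ee (\<Sum>p\<in>P. real (v p) * ln (real p)) t)"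
    by (intro sum.cong refl) (simp add: prod.distrib prod_ee assms)
  finally show ?thesis .
qed

lemma ln_gap:
  fixes a b Q :: nat
  assumes "a \<noteq> b" "1 \<le> a" "1 \<le> b" "a \<le> Q" "b \<le> Q"
  shows "1 / real Q \<le> \<bar>ln (real a) - ln (real b)\<bar>"
proof -
  have key: "1 / real Q \<le> ln (real b') - ln (real a')" if "a' < b'" "1 \<le> a'" "b' \<le> Q" for a' b' :: nat
  proof -
    have pa: "0 < real a'" "0 < real b'" using that by auto
    have "ln (real a' / real b') \<le> real a' / real b' - 1"
      by (rule ln_le_minus_one) (use pa in simp)
    then have "ln (real a') - ln (real b') \<le> (real a' - real b') / real b'"
      using pa by (simp add: ln_div diff_divide_distrib)
    moreover have "(real a' - real b') / real b' \<le> - 1 / real Q"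
    proof -
      have "real a' - real b' \<le> -1" using that by linarith
      then have "(real a' - real b') / real b' \<le> -1 / real b'"
        using pa divide_right_mono[of "real a' - real b'" "-1" "real b'"] by simp
      also have "\<dots> \<le> -1 / real Q" using pa that by (simp add: frac_le)
      finally show ?thesis .
    qed
    ultimately show ?thesis by simp
  qed
  show ?thesis
  proof (cases "a < b")
    case True then show ?thesis using key[of a b] assms by simp
  next
    case False then have "b < a" using assms by simp
    then show ?thesis using key[of b a] assms by simp
  qed
qed



lemma PiE_diff_point:
  assumes "v \<in> PiE P B" "w \<in> PiE P B" "v \<noteq> w"
  shows "\<exists>q\<in>P. v q \<noteq> w q"
  using assms by (meson PiE_ext)

lemma Dp_mv:
  fixes f :: "nat \<Rightarrow> complex"
  assumes fin: "finite P" and pr: "\<And>p. p \<in> P \<Longrightarrow> prime p"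
    and fu: "\<And>p. p \<in> P \<Longrightarrow> cmod (f p) = 1" and T: "0 \<le> T"
  shows "\<exists>J. ((\<lambda>t. (cmod (Dp f N r P t))\<^sup>2) has_integral J) {0..T} \<and>
     \<bar>J - T * (\<Sum>s\<le>r*N. (cmod (kb N r s))\<^sup>2) ^ card P\<bar>
       \<le> 2 * (real ((N+1)^r) ^ card P)\<^sup>2 * real (\<Prod>p\<in>P. p ^ (r*N))"
proof -
  define V where "V = PiE P (\<lambda>_. {..r*N})"
  define c where "c v = (\<Prod>p\<in>P. kb N r (v p) * cnj (f p)^(v p))" for v
  define lam where "lam v = (\<Sum>p\<in>P. real (v p) * ln (real p))" for v :: "nat \<Rightarrow> nat"
  define Q where "Q = (\<Prod>p\<in>P. p ^ (r*N))"
  define nv where "nv v = (\<Prod>p\<in>P. p ^ (v p))" for v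
  have finV: "finite V" unfolding V_def using fin by (intro finite_PiE) auto
  have ppos: "p > 0" if "p \<in> P" for p using pr[OF that] prime_gt_0_nat by blast
  have Qpos: "Q \<ge> 1" unfolding Q_def using ppos by (intro prod_ge_1) (simp add: Suc_le_eq)
  have lam_nv: "lam v = ln (real (nv v))" for v
  proof -
    have "ln (real (nv v)) = ln (\<Prod>p\<in>P. real p ^ v p)" unfolding nv_def by simp
    also have "\<dots> = (\<Sum>p\<in>P. ln (real p ^ v p))" using ppos by (intro ln_prod fin) auto
    also have "\<dots> = lam v" unfolding lam_def using ppos by (intro sum.cong refl) (simp add: ln_realpow)
    finally show ?thesis by simp
  qed
  have nv_ge: "1 \<le> nv v" for v unfolding nv_def using ppos by (intro prod_ge_1) (simp add: Suc_le_eq)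
  have nv_le: "nv v \<le> Q" if "v \<in> V" for v
    unfolding nv_def Q_def
  proof (intro prod_mono conjI)
    fix p assume p: "p \<in> P"
    have "v p \<le> r * N" using that p unfolding V_def by auto
    then show "p ^ v p \<le> p ^ (r*N)" using ppos[OF p] by (intro power_increasing) auto
  qed simp
  have nv_inj: "nv v \<noteq> nv w" if vin: "v \<in> V" "w \<in> V" and vne: "v \<noteq> w" for v w
  proof
    assume eq: "nv v = nv w"
    have vV: "v \<in> PiE P (\<lambda>_. {..r*N})" "w \<in> PiE P (\<lambda>_. {..r*N})" using vin unfolding V_def by auto
    obtain q where q: "q \<in> P" "v q \<noteq> w q" using PiE_diff_point[OF vV vne] by blast
    have "multiplicity q (nv v) = v q" unfolding nv_def
      using multiplicity_prod_prime_powers[OF fin pr pr[OF q(1)], of v] q by simp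
    moreover have "multiplicity q (nv w) = w q" unfolding nv_def
      using multiplicity_prod_prime_powers[OF fin pr pr[OF q(1)], of w] q by simp
    ultimately show False using eq q by simp
  qed
  have g: "1 / real Q > 0" using Qpos by simp
  have gap: "1 / real Q \<le> \<bar>lam v - lam w\<bar>" if "v \<in> V" "w \<in> V" "v \<noteq> w" for v w
    unfolding lam_nv by (rule ln_gap) (use nv_inj nv_ge nv_le that in auto)
  have Dexp: "Dp f N r P t = (\<Sum>v\<in>V. c v * ee (lam v) t)" for t
    unfolding V_def c_def lam_def by (rule D_expand[OF fin])
  note mv = mean_value[OF finV T g gap, where c=c]
  have nc: "cmod (c v) = (\<Prod>p\<in>P. cmod (kb N r (v p)))" for v
    unfolding c_def prod_norm[symmetric] using fu by (intro prod.cong refl) (simp add: norm_mult norm_power)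
  have s2: "(\<Sum>v\<in>V. (cmod (c v))\<^sup>2) = (\<Sum>s\<le>r*N. (cmod (kb N r s))\<^sup>2) ^ card P"
  proof -
    have "(\<Sum>v\<in>V. (cmod (c v))\<^sup>2) = (\<Sum>v\<in>V. \<Prod>p\<in>P. (cmod (kb N r (v p)))\<^sup>2)"
      unfolding nc by (simp add: prod_power_distrib)
    also have "\<dots> = (\<Prod>p\<in>P. \<Sum>s\<le>r*N. (cmod (kb N r s))\<^sup>2)"
      unfolding V_def by (rule prod_sum_PiE[symmetric]) (use fin in auto)
    finally show ?thesis by simp
  qed
  have s1: "(\<Sum>v\<in>V. cmod (c v)) = real ((N+1)^r) ^ card P"
  proof -
    have "(\<Sum>v\<in>V. cmod (c v)) = (\<Prod>p\<in>P. \<Sum>s\<le>r*N. cmod (kb N r s))"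
      unfolding nc V_def by (rule prod_sum_PiE[symmetric]) (use fin in auto)
    then show ?thesis by (simp add: sum_norm_kb)
  qed
  show ?thesis
  proof (intro exI conjI)
    show "((\<lambda>t. (cmod (Dp f N r P t))\<^sup>2) has_integral
           Re (\<Sum>v\<in>V. \<Sum>w\<in>V. (c v * cnj (c w)) * integral {0..T} (ee (lam v - lam w)))) {0..T}"
      unfolding Dexp by (rule mv(1))
    show "\<bar>Re (\<Sum>v\<in>V. \<Sum>w\<in>V. (c v * cnj (c w)) * integral {0..T} (ee (lam v - lam w)))
       - T * (\<Sum>s\<le>r*N. (cmod (kb N r s))\<^sup>2) ^ card P\<bar>
       \<le> 2 * (real ((N+1)^r) ^ card P)\<^sup>2 * real (\<Prod>p\<in>P. p ^ (r*N))"
      using mv(2) unfolding s1 s2 Q_def[symmetric] by simp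
  qed
qed



lemma A_norm_le:
  fixes w :: complex assumes "cmod w = 1"
  shows "cmod (\<Sum>j\<le>N. w^j) \<le> real (N+1)"
proof -
  have "cmod (\<Sum>j\<le>N. w^j) \<le> (\<Sum>j\<le>N. cmod (w^j))" by (rule norm_sum)
  also have "\<dots> = real (N+1)" using assms by (simp add: norm_power)
  finally show ?thesis .
qed

lemma A_bad:
  fixes w :: complex assumes "cmod w = 1" "w \<noteq> 1"
  shows "cmod (\<Sum>j\<le>N. w^j) \<le> 2 / cmod (w - 1)"
proof -
  have "w ^ Suc N - 1 = (w - 1) * (\<Sum>j<Suc N. w^j)" by (rule power_diff_1_eq)
  then have e: "(\<Sum>j\<le>N. w^j) = (w ^ Suc N - 1) / (w - 1)"
    using assms by (simp add: lessThan_Suc_atMost field_simps)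
  have "cmod (w ^ Suc N - 1) \<le> cmod (w ^ Suc N) + cmod (1::complex)" by (rule norm_triangle_ineq4)
  also have "\<dots> = 2" using assms by (simp only: norm_power) simp
  finally have "cmod (w ^ Suc N - 1) \<le> 2" .
  then show ?thesis unfolding e norm_divide using assms
    by (simp add: divide_right_mono)
qed

lemma norm_nit [simp]: "cmod (nit n t) = 1"
  by (simp add: nit_ee)

lemma norm_wp: "cmod (f p) = 1 \<Longrightarrow> cmod (wp f p t) = 1"
  by (simp add: wp_def norm_mult)

lemma norm_wp1: "cmod (f p) = 1 \<Longrightarrow> cmod (wp f p t - 1) = cmod (nit p t - f p)"
proof -
  assume a: "cmod (f p) = 1"
  have "f p * cnj (f p) = 1" using a by (metis complex_norm_square mult.commute of_real_1 power_one)
  then have "wp f p t - 1 = (nit p t - f p) * cnj (f p)" by (simp add: wp_def algebra_simps)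
  then show ?thesis using a by (simp add: norm_mult)
qed

lemma continuous_nit [continuous_intros]: "continuous_on S (nit n)"
  unfolding nit_ee by (rule continuous_on_ee)

lemma sum_sq_le_sq_sum:
  fixes x :: "'a \<Rightarrow> real"
  assumes "finite A" "\<And>a. a \<in> A \<Longrightarrow> 0 \<le> x a"
  shows "(\<Sum>a\<in>A. (x a)\<^sup>2) \<le> (\<Sum>a\<in>A. x a)\<^sup>2"
proof -
  have "(\<Sum>a\<in>A. (x a)\<^sup>2) \<le> (\<Sum>a\<in>A. x a * (\<Sum>b\<in>A. x b))"
    unfolding power2_eq_square
    by (intro sum_mono mult_left_mono member_le_sum) (use assms in auto)
  also have "\<dots> = (\<Sum>a\<in>A. x a)\<^sup>2" by (simp add: power2_eq_square sum_distrib_right)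
  finally show ?thesis .
qed

lemma m_le: "(\<Sum>s\<le>r*N. (cmod (kb N r s))\<^sup>2) \<le> real (N+1) ^ (2*r)"
proof -
  have "(\<Sum>s\<le>r*N. (cmod (kb N r s))\<^sup>2) \<le> (\<Sum>s\<le>r*N. cmod (kb N r s))\<^sup>2"
    by (rule sum_sq_le_sq_sum) auto
  also have "\<dots> = real (N+1) ^ (2*r)" unfolding sum_norm_kb by (metis of_nat_power power_mult mult.commute)
  finally show ?thesis .
qed



lemma G_compact:
  "compact {t\<in>{0..T}. \<forall>p\<in>P. cmod (nit p t - f p) \<le> (\<delta>::real)}"
proof -
  have e: "{t\<in>{0..T}. \<forall>p\<in>P. cmod (nit p t - f p) \<le> \<delta>} = {0..T} \<inter> (\<Inter>p\<in>P. {t. cmod (nit p t - f p) \<le> \<delta>})"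
    by auto
  have "closed {t. cmod (nit p t - f p) \<le> \<delta>}" for p
    by (intro closed_Collect_le continuous_intros)
  then show ?thesis unfolding e by (intro compact_Int_closed compact_Icc closed_INT) auto
qed

lemma G_indicator_integral:
  assumes "S \<in> lmeasurable" "S \<subseteq> {0..T::real}"
  shows "(indicator S has_integral measure lebesgue S) {0..T}"
proof -
  have "(indicator S has_integral measure lebesgue S) UNIV"
    using assms(1) lmeasurable_iff_has_integral by blast
  moreover have "indicator S = (\<lambda>x. if x \<in> {0..T} then indicator S x else (0::real))"
    using assms(2) by (auto simp: indicator_def fun_eq_iff)
  ultimately have "((\<lambda>x. if x \<in> {0..T} then indicator S x else (0::real)) has_integral measure lebesgue S) UNIV"
    by metis
  then show ?thesis by (simp only: has_integral_restrict_UNIV)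
qed

lemma Dp_remove:
  assumes "finite P" "p \<in> P"
  shows "Dp f N r P t = (\<Sum>j\<le>N. (wp f p t)^j)^r * Dp f N r (P - {p}) t"
  unfolding Dp_def using assms by (simp add: prod.remove)

lemma Dp_norm_le:
  assumes "finite P" "\<And>p. p \<in> P \<Longrightarrow> cmod (f p) = 1"
  shows "cmod (Dp f N r P t) \<le> real (N+1) ^ (r * card P)"
proof -
  have "cmod (Dp f N r P t) = (\<Prod>p\<in>P. cmod (\<Sum>j\<le>N. (wp f p t)^j) ^ r)"
    unfolding Dp_def prod_norm[symmetric] norm_power ..
  also have "\<dots> \<le> (\<Prod>p\<in>P. real (N+1) ^ r)"
    by (intro prod_mono conjI power_mono A_norm_le norm_wp assms) auto
  also have "\<dots> = real (N+1) ^ (r * card P)" by (simp add: power_mult)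
  finally show ?thesis .
qed



lemma kron:
  fixes f :: "nat \<Rightarrow> complex" and P :: "nat set" and \<delta> T :: real
  assumes fin: "finite P" and pr: "\<And>p. p \<in> P \<Longrightarrow> prime p"
    and fu: "\<And>p. p \<in> P \<Longrightarrow> cmod (f p) = 1" and T: "0 \<le> T" and dpos: "0 < \<delta>"
    and Nd: "4 / \<delta> \<le> real (N+1)"
    and rk: "8 * real (card P) * real (r*N+1) \<le> 4 ^ r"
    and TQ: "8 * real (\<Prod>p\<in>P. p ^ (r*N)) * real (r*N+1) ^ card P \<le> T"
  shows "T / (2 * real (r*N+1) ^ card P) \<le> measure lebesgue {t\<in>{0..T}. \<forall>p\<in>P. cmod (nit p t - f p) \<le> \<delta>}"
proof (cases "P = {}")
  case True
  then have "{t\<in>{0..T}. \<forall>p\<in>P. cmod (nit p t - f p) \<le> \<delta>} = {0..T}" by auto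
  then show ?thesis using T True by simp
next
  case Pne: False
  define G where "G = {t\<in>{0..T}. \<forall>p\<in>P. cmod (nit p t - f p) \<le> \<delta>}"
  define k where "k = card P"
  define M where "M = real (N+1)"
  define m where "m = (\<Sum>s\<le>r*N. (cmod (kb N r s))\<^sup>2)"
  define R1 where "R1 = real (r*N+1)"
  define Q where "Q = real (\<Prod>p\<in>P. p ^ (r*N))"
  define X where "X = (real ((N+1)^r) ^ k)\<^sup>2"
  define B where "B = (2 / \<delta>) ^ (2*r)"
  have k1: "k \<ge> 1" unfolding k_def using Pne fin by (simp add: Suc_le_eq card_gt_0_iff)
  have Mpos: "M > 0" unfolding M_def by simp
  have R1pos: "R1 > 0" unfolding R1_def by (metis of_nat_0_less_iff zero_less_Suc Suc_eq_plus1)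
  have X_eq: "X = M ^ (2*r*k)"
    unfolding X_def M_def by (simp only: of_nat_power power_mult[symmetric]) (simp add: ac_simps)
  have Xpos: "X > 0" using Mpos X_eq by simp
  have ppos: "p > 0" if "p \<in> P" for p using pr[OF that] prime_gt_0_nat by blast
  have Qge1n: "(\<Prod>p\<in>P. p ^ (r*N)) \<ge> 1" using ppos by (intro prod_ge_1) (simp add: Suc_le_eq)
  then have Qge1: "Q \<ge> 1" unfolding Q_def by linarith
  have Gc: "compact G" unfolding G_def by (rule G_compact)
  have Gl: "G \<in> lmeasurable" by (rule lmeasurable_compact[OF Gc])
  have GT: "G \<subseteq> {0..T}" unfolding G_def by auto
  have ind: "(indicator G has_integral measure lebesgue G) {0..T}"
    by (rule G_indicator_integral[OF Gl GT])
  obtain J where J: "((\<lambda>t. (cmod (Dp f N r P t))\<^sup>2) has_integral J) {0..T}"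
    and Jb: "\<bar>J - T * m ^ k\<bar> \<le> 2 * X * Q"
    using Dp_mv[where f=f and P=P and T=T and N=N and r=r] fin pr fu T unfolding m_def k_def X_def Q_def by blast
  have "\<forall>p\<in>P. \<exists>J'. ((\<lambda>t. (cmod (Dp f N r (P - {p}) t))\<^sup>2) has_integral J') {0..T} \<and>
        J' \<le> T * m ^ (k - 1) + 2 * (M ^ (2*r*(k-1))) * Q"
  proof
    fix p assume p: "p \<in> P"
    have cd: "card (P - {p}) = k - 1" unfolding k_def using p fin by simp
    have finp: "finite (P - {p})" using fin by simp
    obtain J' where J': "((\<lambda>t. (cmod (Dp f N r (P - {p}) t))\<^sup>2) has_integral J') {0..T}"
      and Jb': "\<bar>J' - T * m ^ (k-1)\<bar> \<le> 2 * (real ((N+1)^r) ^ (k-1))\<^sup>2 * real (\<Prod>q\<in>P-{p}. q ^ (r*N))"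
      using Dp_mv[where f=f and P="P-{p}" and T=T and N=N and r=r] finp pr fu T unfolding m_def cd by blast
    have "real (\<Prod>q\<in>P-{p}. q ^ (r*N)) \<le> Q"
    proof -
      have e: "(\<Prod>q\<in>P. q ^ (r*N)) = p ^ (r*N) * (\<Prod>q\<in>P-{p}. q ^ (r*N))"
        using fin p by (simp add: prod.remove)
      have "1 \<le> p ^ (r*N)" using ppos[OF p] by simp
      then have "(\<Prod>q\<in>P-{p}. q ^ (r*N)) \<le> (\<Prod>q\<in>P. q ^ (r*N))"
        unfolding e using mult_le_mono1[of 1 "p ^ (r*N)" "\<Prod>q\<in>P-{p}. q ^ (r*N)"] by simp
      then show ?thesis unfolding Q_def by linarith
    qed
    moreover have "(real ((N+1)^r) ^ (k-1))\<^sup>2 = M ^ (2*r*(k-1))"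
      unfolding M_def by (simp only: of_nat_power power_mult[symmetric]) (simp add: ac_simps)
    ultimately have "2 * (real ((N+1)^r) ^ (k-1))\<^sup>2 * real (\<Prod>q\<in>P-{p}. q ^ (r*N)) \<le> 2 * (M ^ (2*r*(k-1))) * Q"
      using Mpos by (metis mult_left_mono zero_le_power less_imp_le mult_2 add_nonneg_nonneg)
    then have "J' \<le> T * m ^ (k - 1) + 2 * (M ^ (2*r*(k-1))) * Q"
      using Jb' by linarith
    then show "\<exists>J'. ((\<lambda>t. (cmod (Dp f N r (P - {p}) t))\<^sup>2) has_integral J') {0..T} \<and>
        J' \<le> T * m ^ (k - 1) + 2 * (M ^ (2*r*(k-1))) * Q" using J' by blast
  qed
  then obtain Jp where Jp: "\<And>p. p \<in> P \<Longrightarrow> ((\<lambda>t. (cmod (Dp f N r (P - {p}) t))\<^sup>2) has_integral Jp p) {0..T}"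
    and Jpb: "\<And>p. p \<in> P \<Longrightarrow> Jp p \<le> T * m ^ (k - 1) + 2 * (M ^ (2*r*(k-1))) * Q"
    by metis
  have pw: "(cmod (Dp f N r P t))\<^sup>2 \<le> X * indicator G t + (\<Sum>p\<in>P. B * (cmod (Dp f N r (P - {p}) t))\<^sup>2)"
    if t: "t \<in> {0..T}" for t
  proof (cases "t \<in> G")
    case True
    have "cmod (Dp f N r P t) \<le> M ^ (r * k)"
      unfolding M_def k_def by (rule Dp_norm_le[OF fin fu])
    then have "(cmod (Dp f N r P t))\<^sup>2 \<le> (M ^ (r * k))\<^sup>2" by (intro power_mono) auto
    also have "\<dots> = X" unfolding X_eq by (simp only: power_mult[symmetric]) (simp add: ac_simps)
    finally have "(cmod (Dp f N r P t))\<^sup>2 \<le> X * indicator G t" using True by simp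
    moreover have "0 \<le> (\<Sum>p\<in>P. B * (cmod (Dp f N r (P - {p}) t))\<^sup>2)"
      unfolding B_def using dpos by (intro sum_nonneg mult_nonneg_nonneg) auto
    ultimately show ?thesis by linarith
  next
    case False
    then obtain p where p: "p \<in> P" and bad: "cmod (nit p t - f p) > \<delta>" using t unfolding G_def by auto
    have w1: "cmod (wp f p t) = 1" by (rule norm_wp[where f=f and p=p, OF fu[OF p]])
    have wb: "cmod (wp f p t - 1) > \<delta>" using bad norm_wp1[where f=f and p=p and t=t, OF fu[OF p]] by simp
    then have wne: "wp f p t \<noteq> 1" using dpos by auto
    have "cmod (\<Sum>j\<le>N. (wp f p t)^j) \<le> 2 / cmod (wp f p t - 1)" by (rule A_bad[OF w1 wne])
    also have "\<dots> \<le> 2 / \<delta>" using wb dpos by (intro divide_left_mono) (auto simp: zero_less_mult_iff)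
    finally have Ab: "cmod (\<Sum>j\<le>N. (wp f p t)^j) \<le> 2 / \<delta>" .
    have "(cmod (Dp f N r P t))\<^sup>2 = (cmod (\<Sum>j\<le>N. (wp f p t)^j)) ^ (2*r) * (cmod (Dp f N r (P - {p}) t))\<^sup>2"
      unfolding Dp_remove[OF fin p] norm_mult norm_power power_mult_distrib by (simp add: power_mult[symmetric] mult.commute)
    also have "\<dots> \<le> B * (cmod (Dp f N r (P - {p}) t))\<^sup>2"
      unfolding B_def by (intro mult_right_mono power_mono Ab) auto
    also have "\<dots> \<le> (\<Sum>q\<in>P. B * (cmod (Dp f N r (P - {q}) t))\<^sup>2)"
      using p fin by (intro member_le_sum) (auto simp: B_def dpos less_imp_le)
    also have "\<dots> \<le> X * indicator G t + (\<Sum>q\<in>P. B * (cmod (Dp f N r (P - {q}) t))\<^sup>2)"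
      using Xpos by (simp add: indicator_def)
    finally show ?thesis .
  qed
  have int_le: "J \<le> X * measure lebesgue G + (\<Sum>p\<in>P. B * Jp p)"
  proof (rule has_integral_le[OF J _ pw])
    show "((\<lambda>t. X * indicator G t + (\<Sum>p\<in>P. B * (cmod (Dp f N r (P - {p}) t))\<^sup>2)) has_integral
           X * measure lebesgue G + (\<Sum>p\<in>P. B * Jp p)) {0..T}"
      by (intro has_integral_add has_integral_mult_right has_integral_sum fin ind; auto intro: Jp)
  qed
  have mlow: "M ^ (2*r) / R1 \<le> m"
    using sum_sq_kb[of N r] unfolding M_def R1_def m_def by (simp only: of_nat_power)
  have mup: "m \<le> M ^ (2*r)" unfolding m_def M_def by (rule m_le)
  have "0 < M ^ (2*r) / R1" using Mpos R1pos by simp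
  then have mpos: "m > 0" using mlow by linarith
  have kB: "real k * B \<le> m / 8"
  proof -
    have "2 / \<delta> \<le> M / 2" using Nd dpos unfolding M_def by (simp add: field_simps)
    then have "B \<le> (M / 2) ^ (2*r)" unfolding B_def using dpos by (intro power_mono) auto
    also have "\<dots> = M ^ (2*r) / 4 ^ r"
    proof -
      have "(2::real) ^ (2*r) = 4 ^ r" by (simp add: power_mult)
      then show ?thesis by (simp add: power_divide)
    qed
    also have "\<dots> \<le> R1 * m / 4 ^ r"
    proof -
      have "M ^ (2*r) \<le> m * R1" using mlow R1pos by (simp add: pos_divide_le_eq)
      then show ?thesis by (intro divide_right_mono) (auto simp: mult.commute)
    qed
    finally have "real k * B \<le> real k * (R1 * m / 4 ^ r)" by (intro mult_left_mono) auto
    also have "\<dots> = (8 * real k * R1) * m / (8 * 4 ^ r)" by (simp add: field_simps)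
    also have "\<dots> \<le> 4 ^ r * m / (8 * 4 ^ r)"
      using rk mpos unfolding k_def R1_def by (intro divide_right_mono mult_right_mono) auto
    also have "\<dots> = m / 8" by simp
    finally show ?thesis .
  qed
  have sumB: "(\<Sum>p\<in>P. B * Jp p) \<le> T * m ^ k / 8 + X * Q / 4"
  proof -
    have "(\<Sum>p\<in>P. B * Jp p) \<le> (\<Sum>p\<in>P. B * (T * m ^ (k - 1) + 2 * (M ^ (2*r*(k-1))) * Q))"
      using Jpb by (intro sum_mono mult_left_mono) (auto simp: B_def dpos less_imp_le)
    also have "\<dots> = (real k * B) * (T * m ^ (k - 1) + 2 * (M ^ (2*r*(k-1))) * Q)"
      by (simp add: k_def mult.assoc)
    also have "\<dots> \<le> (m / 8) * (T * m ^ (k - 1) + 2 * (M ^ (2*r*(k-1))) * Q)"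
    proof -
      have "0 \<le> T * m ^ (k - 1) + 2 * (M ^ (2*r*(k-1))) * Q"
        using T mpos Mpos Qge1 by (intro add_nonneg_nonneg mult_nonneg_nonneg) auto
      then show ?thesis using kB by (intro mult_right_mono) auto
    qed
    also have "\<dots> = T * (m * m ^ (k-1)) / 8 + (m * M ^ (2*r*(k-1))) * Q / 4" by (simp add: field_simps)
    also have "\<dots> \<le> T * m ^ k / 8 + X * Q / 4"
    proof -
      have e1: "m * m ^ (k-1) = m ^ k" using k1 by (cases k) auto
      have "m * M ^ (2*r*(k-1)) \<le> M ^ (2*r) * M ^ (2*r*(k-1))" using mup Mpos by (intro mult_right_mono) auto
      also have "\<dots> = X"
      proof -
        have "2*r + 2*r*(k-1) = 2*r*k" using k1 by (cases k) auto
        then show ?thesis unfolding X_eq power_add[symmetric] by simp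
      qed
      finally have "m * M ^ (2*r*(k-1)) \<le> X" .
      then have "(m * M ^ (2*r*(k-1))) * Q \<le> X * Q" using Qge1 by (intro mult_right_mono) auto
      then show ?thesis unfolding e1 by linarith
    qed
    finally show ?thesis .
  qed
  have mk: "X / R1 ^ k \<le> m ^ k"
  proof -
    have "(M ^ (2*r) / R1) ^ k \<le> m ^ k" using mlow Mpos R1pos by (intro power_mono) auto
    moreover have "(M ^ (2*r) / R1) ^ k = X / R1 ^ k" unfolding X_eq power_divide by (simp only: power_mult)
    ultimately show ?thesis by simp
  qed
  have "X * measure lebesgue G \<ge> 7/8 * T * m ^ k - 9/4 * X * Q"
    using int_le sumB Jb by linarith
  moreover have "7/8 * T * m ^ k \<ge> 7/8 * T * (X / R1 ^ k)" using mk T by (intro mult_left_mono) auto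
  moreover have "X * (7/8 * T / R1 ^ k - 9/4 * Q) = 7/8 * T * (X / R1 ^ k) - 9/4 * X * Q"
    by (simp add: field_simps)
  ultimately have "X * measure lebesgue G \<ge> X * (7/8 * T / R1 ^ k - 9/4 * Q)" by linarith
  then have mG: "measure lebesgue G \<ge> 7/8 * T / R1 ^ k - 9/4 * Q" using Xpos by simp
  have "8 * Q * R1 ^ k \<le> T" using TQ unfolding Q_def R1_def k_def by simp
  then have "Q \<le> T / (8 * R1 ^ k)" using R1pos by (simp add: field_simps)
  moreover have "T / (8 * R1 ^ k) = (T / R1 ^ k) / 8" "T / (2 * R1 ^ k) = (T / R1 ^ k) / 2"
    "7/8 * T / R1 ^ k = 7/8 * (T / R1 ^ k)" by simp_all
  moreover have "0 \<le> T / R1 ^ k" using T R1pos by simp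
  ultimately have "T / (2 * R1 ^ k) \<le> 7/8 * T / R1 ^ k - 9/4 * Q" by linarith
  with mG show ?thesis unfolding G_def R1_def k_def by simp
qed



lemma nit_mult: "m > 0 \<Longrightarrow> n > 0 \<Longrightarrow> nit (m * n) t = nit m t * nit n t"
  unfolding nit_def by (simp add: ln_mult distrib_left exp_add[symmetric] algebra_simps)

lemma nit_1 [simp]: "nit 1 t = 1"
  unfolding nit_def by simp

lemma err_bound:
  fixes f :: "nat \<Rightarrow> complex"
  assumes cm: "completely_multiplicative f" and fu: "\<forall>n>0. cmod (f n) = 1" and d: "0 \<le> \<delta>"
  shows "n > 0 \<Longrightarrow> (\<forall>p\<in>prime_factors n. cmod (nit p t - f p) \<le> \<delta>) \<Longrightarrow>
         cmod (nit n t - f n) \<le> \<delta> * log 2 (real n)"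
proof (induction n rule: less_induct)
  case (less n)
  show ?case
  proof (cases "n = 1")
    case True
    then show ?thesis using cm unfolding completely_multiplicative_def by (simp add: nit_def)
  next
    case False
    then have "n > 1" using less.prems by simp
    then obtain p where p: "prime p" "p dvd n" using prime_factor_nat[of n] by auto
    then obtain m where nm: "n = p * m" by (auto elim: dvdE)
    have pp: "p > 1" using p prime_gt_1_nat by blast
    have m0: "m > 0" using nm less.prems by (metis gr0I mult_0_right)
    have mn: "m < n" using nm pp m0 by simp
    have pf: "p \<in> prime_factors n" using p less.prems by (simp add: in_prime_factors_iff)
    have sub: "prime_factors m \<subseteq> prime_factors n"
      using nm m0 pp by (intro dvd_prime_factors) auto
    have IH: "cmod (nit m t - f m) \<le> \<delta> * log 2 (real m)"
      using less.IH[OF mn m0] less.prems sub by blast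
    have fp: "cmod (nit p t - f p) \<le> \<delta>" using less.prems pf by blast
    have fn: "f n = f p * f m" using cm pp m0 nm unfolding completely_multiplicative_def by simp
    have nn: "nit n t = nit p t * nit m t" using nm pp m0 by (simp add: nit_mult)
    have "nit n t - f n = (nit p t - f p) * nit m t + f p * (nit m t - f m)"
      unfolding fn nn by (simp add: algebra_simps)
    then have "cmod (nit n t - f n) \<le> cmod (nit p t - f p) * cmod (nit m t) + cmod (f p) * cmod (nit m t - f m)"
      by (metis norm_mult norm_triangle_ineq)
    also have "\<dots> = cmod (nit p t - f p) + cmod (nit m t - f m)" using fu pp by simp
    also have "\<dots> \<le> \<delta> + \<delta> * log 2 (real m)" using fp IH by simp
    also have "\<dots> = \<delta> * log 2 (2 * real m)" using m0 by (simp add: log_mult distrib_left)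
    also have "\<dots> \<le> \<delta> * log 2 (real n)"
    proof -
      have "2 * m \<le> n" using nm pp by simp
      then have "2 * real m \<le> real n" by linarith
      then have "log 2 (2 * real m) \<le> log 2 (real n)" using m0 by simp
      then show ?thesis using d by (intro mult_left_mono) auto
    qed
    finally show ?thesis .
  qed
qed

lemma asym:
  "\<exists>L0::real. \<forall>L\<ge>L0. 2 \<le> L \<and> 16 * L^3 * exp (L/2) \<le> exp L \<and> ln 8 + 16 * exp L / L^4 \<le> exp L \<and>
     ln 2 + 2 * exp L / L^7 \<le> exp L / L^2 \<and>
     8 * (2 * exp L / L^8) * (16 * L^3 * exp (L/2)) \<le> exp (2*L)"
proof -
  have "eventually (\<lambda>L::real. 2 \<le> L \<and> 16 * L^3 * exp (L/2) \<le> exp L \<and> ln 8 + 16 * exp L / L^4 \<le> exp L \<and>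
     ln 2 + 2 * exp L / L^7 \<le> exp L / L^2 \<and>
     8 * (2 * exp L / L^8) * (16 * L^3 * exp (L/2)) \<le> exp (2*L)) at_top"
    by (intro eventually_conj; real_asymp)
  then show ?thesis by (simp add: eventually_at_top_linorder)
qed



lemma params:
  fixes L l :: real and k N r :: nat
  assumes L2: "2 \<le> L" and E2: "16 * L^3 * exp (L/2) \<le> exp L"
    and E3: "ln 8 + 16 * exp L / L^4 \<le> exp L"
    and E4: "ln 2 + 2 * exp L / L^7 \<le> exp L / L^2"
    and E5: "8 * (2 * exp L / L^8) * (16 * L^3 * exp (L/2)) \<le> exp (2*L)"
    and l1: "1/2 \<le> l" and l2: "l \<le> exp (L/2)"
    and kl: "real k * l \<le> exp L / L^8"
    and N1: "4 * l * L^2 \<le> real N" and N2: "real N \<le> 4 * l * L^2 + 1"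
    and r1: "2 * L \<le> real r" and r2: "real r \<le> 2 * L + 1"
  shows "8 * real k * real (r*N+1) \<le> 4 ^ r"
    and "real (r*N+1) \<le> exp L"
    and "ln 8 + L * (real (r*N+1) * real k) \<le> exp L"
    and "ln 2 + L * real k \<le> exp L / L^2"
proof -
  have Lpos: "L > 0" using L2 by simp
  have lpos: "l > 0" using l1 by simp
  have L4: "4 \<le> L^2"
  proof -
    have "2*2 \<le> L*L" using L2 by (intro mult_mono) auto
    then show ?thesis by (simp add: power2_eq_square)
  qed
  have lL: "l * L^2 \<ge> 1"
  proof -
    have "1/2 * 4 \<le> l * L^2" using l1 L4 by (intro mult_mono) auto
    then show ?thesis by simp
  qed
  have L3: "L^3 \<ge> L^2" using L2 by (simp add: power_increasing)
  have "l * L^2 \<le> l * L^3" using L3 lpos by (intro mult_left_mono) auto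
  then have lL3: "l * L^3 \<ge> 1" using lL by linarith
  have Nb: "real N \<le> 5 * l * L^2" using N2 lL by linarith
  have rb: "real r \<le> 3 * L" using r2 L2 by linarith
  have R1: "real (r*N+1) = real r * real N + 1" by simp
  have "real r * real N \<le> (3 * L) * (5 * l * L^2)"
    using Nb rb by (intro mult_mono) auto
  also have "\<dots> = 15 * (l * L^3)" by (simp add: power2_eq_square power3_eq_cube)
  finally have R1b: "real (r*N+1) \<le> 16 * (l * L^3)" using lL3 R1 by linarith
  have R1c: "real (r*N+1) \<le> 16 * L^3 * exp (L/2)"
  proof -
    have "16 * (l * L^3) \<le> 16 * (exp (L/2) * L^3)" using l2 Lpos by (intro mult_left_mono mult_right_mono) auto
    then show ?thesis using R1b by (simp add: mult_ac)
  qed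
  show R1e: "real (r*N+1) \<le> exp L" using R1c E2 by linarith
  have kb2: "real k \<le> 2 * exp L / L^8"
  proof -
    have "real k * (1/2) \<le> real k * l" using l1 by (intro mult_left_mono) auto
    moreover have "2 * exp L / L^8 = 2 * (exp L / L^8)" by simp
    ultimately show ?thesis using kl by linarith
  qed
  have "8 * real k * real (r*N+1) \<le> 8 * (2 * exp L / L^8) * (16 * L^3 * exp (L/2))"
    using kb2 R1c by (intro mult_mono) auto
  also have "\<dots> \<le> exp (2*L)" by (rule E5)
  also have "exp (2*L) \<le> (4::real) ^ r"
  proof -
    have "exp (2*L) \<le> exp (real r * ln 4)"
    proof -
      have "exp 1 \<le> (4::real)" using exp_le by simp
      then have l4: "ln (4::real) \<ge> 1" using ln_ge_iff[of 4 1] by simp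
      have "2 * L \<le> real r * 1" using r1 by simp
      also have "\<dots> \<le> real r * ln 4" using l4 by (intro mult_left_mono) auto
      finally have "2 * L \<le> real r * ln 4" .
      then show ?thesis by simp
    qed
    also have "\<dots> = 4 ^ r" by (simp add: exp_of_nat_mult)
    finally show ?thesis .
  qed
  finally show "8 * real k * real (r*N+1) \<le> 4 ^ r" .
  have "real (r*N+1) * real k \<le> 16 * (l * L^3) * real k" using R1b by (intro mult_right_mono) auto
  also have "\<dots> = 16 * L^3 * (real k * l)" by (simp add: mult_ac)
  also have "\<dots> \<le> 16 * L^3 * (exp L / L^8)" using kl Lpos by (intro mult_left_mono) auto
  also have "\<dots> = 16 * exp L / L^5" using Lpos by (simp add: field_simps power_add[symmetric] eval_nat_numeral)
  finally have "L * (real (r*N+1) * real k) \<le> L * (16 * exp L / L^5)" using Lpos by (intro mult_left_mono) auto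
  also have "\<dots> = 16 * exp L / L^4" using Lpos by (simp add: field_simps eval_nat_numeral)
  finally show "ln 8 + L * (real (r*N+1) * real k) \<le> exp L" using E3 by linarith
  have "L * real k \<le> L * (2 * exp L / L^8)" using kb2 Lpos by (intro mult_left_mono) auto
  also have "\<dots> = 2 * exp L / L^7" using Lpos by (simp add: field_simps eval_nat_numeral)
  finally show "ln 2 + L * real k \<le> exp L / L^2" using E4 by linarith
qed



lemma ln2_half: "1/2 \<le> ln (2::real)"
proof -
  have "exp (1/2::real) ^ 2 = exp 1" by (simp flip: exp_of_nat_mult)
  also have "\<dots> \<le> 3" by (rule exp_le)
  finally have "exp (1/2::real) ^ 2 \<le> 2 ^ 2" by simp
  then have "exp (1/2::real) \<le> 2" by (rule power2_le_imp_le) simp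
  then show ?thesis by (subst ln_ge_iff) auto
qed

theorem lemma2p2:
  shows "\<exists>C T0. \<forall>T::real. T \<ge> T0 \<longrightarrow>
    (\<forall>(f::nat \<Rightarrow> complex) (x::real).
       completely_multiplicative f \<longrightarrow> (\<forall>n>0. norm (f n) = 1) \<longrightarrow>
       2 \<le> x \<longrightarrow> x \<le> exp (sqrt (ln T)) \<longrightarrow>
       (let y = ln T / (ln x * (ln (ln T)) ^ 8) in
        \<exists>S. S \<in> sets lebesgue \<and> S \<subseteq> {0..T} \<and>
            measure lebesgue S \<ge> T powr (1 - 1 / (ln (ln T))\<^sup>2) \<and>
            (\<forall>t\<in>S. norm ((\<Sum>n\<in>{n. real n \<le> x \<and> n \<in> smooth y}. nit n t)
                            - (\<Sum>n\<in>{n. real n \<le> x \<and> n \<in> smooth y}. f n))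
                     \<le> C * real (Psi x y) / (ln (ln T))\<^sup>2)))"
proof -
  obtain L0 :: real where L0: "\<And>L. L \<ge> L0 \<Longrightarrow> 2 \<le> L \<and> 16 * L^3 * exp (L/2) \<le> exp L \<and> ln 8 + 16 * exp L / L^4 \<le> exp L \<and>
     ln 2 + 2 * exp L / L^7 \<le> exp L / L^2 \<and>
     8 * (2 * exp L / L^8) * (16 * L^3 * exp (L/2)) \<le> exp (2*L)"
    using asym by blast
  show ?thesis
  proof (intro exI allI impI)
    fix T :: real and f :: "nat \<Rightarrow> complex" and x :: real
    assume T0: "exp (exp L0) \<le> T" and cm: "completely_multiplicative f"
      and fu: "\<forall>n>0. cmod (f n) = 1" and x2: "2 \<le> x" and xle: "x \<le> exp (sqrt (ln T))"
    define lt where "lt = ln T"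
    define L where "L = ln lt"
    have Tpos: "T > 0" using T0 by (smt (verit) exp_gt_zero)
    have lt0: "exp L0 \<le> lt" unfolding lt_def using T0 Tpos by (metis ln_exp ln_le_cancel_iff exp_gt_zero)
    have ltpos: "lt > 0" using lt0 by (smt (verit) exp_gt_zero)
    have LL0: "L0 \<le> L" unfolding L_def using lt0 ltpos by (metis ln_exp ln_le_cancel_iff exp_gt_zero)
    note LF = L0[OF LL0]
    have L2: "2 \<le> L" using LF by blast
    have expL: "exp L = lt" unfolding L_def using ltpos by simp
    have expT: "exp lt = T" unfolding lt_def using Tpos by simp
    define l where "l = ln x"
    have l1: "1/2 \<le> l" unfolding l_def using ln2_half x2 by (smt (verit) ln_le_cancel_iff)
    have lpos: "l > 0" using l1 by simp
    have sq: "sqrt lt = exp (L/2)"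
    proof -
      have "exp (L/2) ^ 2 = exp L" by (simp flip: exp_of_nat_mult)
      then show ?thesis using expL by (metis real_sqrt_unique exp_ge_zero)
    qed
    have l2: "l \<le> exp (L/2)"
    proof -
      have "ln x \<le> ln (exp (sqrt (ln T)))" using xle x2 by (subst ln_le_cancel_iff) auto
      then show ?thesis unfolding l_def using sq lt_def by simp
    qed
    define y where "y = lt / (l * L^8)"
    have Lpos: "L > 0" using L2 by simp
    have ypos: "y > 0" unfolding y_def using ltpos lpos Lpos by simp
    have L8: "L^8 \<ge> 2"
    proof -
      have "(2::real)^1 \<le> 2^8" by simp
      also have "\<dots> \<le> L^8" using L2 by (intro power_mono) auto
      finally show ?thesis by simp
    qed
    have ylt: "y \<le> lt"
    proof -
      have "1/2 * 2 \<le> l * L^8" using l1 L8 by (intro mult_mono) auto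
      then have "1 \<le> l * L^8" by simp
      then show ?thesis unfolding y_def using ltpos by (simp add: divide_le_eq mult_le_cancel_left1 mult.commute)
    qed
    define P where "P = {p::nat. prime p \<and> real p \<le> x \<and> real p \<le> y}"
    have Psub: "P \<subseteq> {1..nat \<lfloor>y\<rfloor>}"
      unfolding P_def using prime_ge_1_nat by (auto simp: le_nat_floor nat_le_iff le_floor_iff)
    have finP: "finite P" using Psub finite_subset by blast
    define k where "k = card P"
    have ky: "real k \<le> y"
    proof -
      have "k \<le> nat \<lfloor>y\<rfloor>" unfolding k_def using card_mono[OF _ Psub] by simp
      then show ?thesis using ypos by linarith
    qed
    have kl: "real k * l \<le> lt / L^8"
    proof -
      have "real k * l \<le> y * l" using ky lpos by (intro mult_right_mono) auto
      also have "\<dots> = lt / L^8" unfolding y_def using lpos by simp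
      finally show ?thesis .
    qed
    define \<delta> where "\<delta> = 1 / (l * L^2)"
    have dpos: "\<delta> > 0" unfolding \<delta>_def using lpos Lpos by simp
    define N where "N = nat \<lceil>4 * l * L^2\<rceil>"
    define r where "r = nat \<lceil>2 * L\<rceil>"
    have N1: "4 * l * L^2 \<le> real N" unfolding N_def by linarith
    have N2: "real N \<le> 4 * l * L^2 + 1"
    proof -
      have "0 \<le> 4 * l * L^2" using lpos by simp
      then have "real N = of_int \<lceil>4 * l * L^2\<rceil>" unfolding N_def by simp
      then show ?thesis using of_int_ceiling_le_add_one[of "4 * l * L^2"] by linarith
    qed
    have r1: "2 * L \<le> real r" unfolding r_def by linarith
    have r2: "real r \<le> 2 * L + 1"
    proof -
      have "real r = of_int \<lceil>2 * L\<rceil>" unfolding r_def using Lpos by simp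
      then show ?thesis using of_int_ceiling_le_add_one[of "2 * L"] by linarith
    qed
    note prm = params[OF L2 _ _ _ _ l1 l2 _ N1 N2 r1 r2, of k, unfolded expL]
    have pr1: "8 * real k * real (r*N+1) \<le> 4 ^ r" using prm LF kl expL by blast
    have pr2: "real (r*N+1) \<le> lt" using prm LF kl expL by blast
    have pr3: "ln 8 + L * (real (r*N+1) * real k) \<le> lt" using prm LF kl expL by blast
    have pr4: "ln 2 + L * real k \<le> lt / L^2" using prm LF kl expL by blast
    have Nd: "4 / \<delta> \<le> real (N+1)" unfolding \<delta>_def using N1 by simp
    have TQ: "8 * real (\<Prod>p\<in>P. p ^ (r*N)) * real (r*N+1) ^ card P \<le> T"
    proof -
      have "real (\<Prod>p\<in>P. p ^ (r*N)) = (\<Prod>p\<in>P. real p ^ (r*N))" by simp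
      also have "\<dots> \<le> (\<Prod>p\<in>P. lt ^ (r*N))"
        using ylt unfolding P_def by (intro prod_mono conjI power_mono) auto
      also have "\<dots> = lt ^ (r*N*k)" unfolding k_def by (simp add: power_mult)
      finally have Qb: "real (\<Prod>p\<in>P. p ^ (r*N)) \<le> lt ^ (r*N*k)" .
      have Rb: "real (r*N+1) ^ card P \<le> lt ^ k" unfolding k_def using pr2 by (intro power_mono) auto
      have "8 * real (\<Prod>p\<in>P. p ^ (r*N)) * real (r*N+1) ^ card P \<le> 8 * lt ^ (r*N*k) * lt ^ k"
        using Qb Rb ltpos by (intro mult_mono mult_left_mono) (auto intro: prod_nonneg)
      also have "\<dots> = 8 * lt ^ ((r*N+1)*k)" by (simp add: power_add[symmetric] algebra_simps)
      also have "\<dots> = exp (ln 8 + L * (real (r*N+1) * real k))"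
      proof -
        have "lt ^ ((r*N+1)*k) = exp (real ((r*N+1)*k) * L)"
          using expL by (metis exp_of_nat_mult)
        moreover have "real ((r*N+1)*k) * L = L * (real (r*N+1) * real k)" by (simp only: of_nat_mult mult_ac)
        ultimately show ?thesis by (simp only: exp_add exp_ln)
      qed
      also have "\<dots> \<le> exp lt" using pr3 by simp
      finally show ?thesis using expT by simp
    qed
    define G where "G = {t\<in>{0..T}. \<forall>p\<in>P. cmod (nit p t - f p) \<le> \<delta>}"
    have prP: "\<And>p. p \<in> P \<Longrightarrow> prime p" unfolding P_def by auto
    have fuP: "\<And>p. p \<in> P \<Longrightarrow> cmod (f p) = 1" using fu prP prime_gt_0_nat by blast
    have meas: "T / (2 * real (r*N+1) ^ card P) \<le> measure lebesgue G"
      unfolding G_def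
      by (rule kron[OF finP prP fuP _ dpos Nd _ TQ]) (use Tpos pr1 k_def in auto)
    have Gl: "G \<in> lmeasurable" unfolding G_def by (rule lmeasurable_compact[OF G_compact])
    have powr_b: "T powr (1 - 1 / L^2) \<le> T / (2 * real (r*N+1) ^ card P)"
    proof -
      have R1pos: "real (r*N+1) > 0" by (metis of_nat_0_less_iff zero_less_Suc Suc_eq_plus1)
      have "2 * real (r*N+1) ^ card P \<le> 2 * lt ^ k" unfolding k_def using pr2 by (intro mult_left_mono power_mono) auto
      also have "\<dots> = exp (ln 2 + L * real k)"
      proof -
        have "lt ^ k = exp (real k * L)" using expL by (metis exp_of_nat_mult)
        then show ?thesis by (simp add: exp_add mult.commute)
      qed
      also have "\<dots> \<le> exp (lt / L^2)" using pr4 by simp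
      finally have A: "2 * real (r*N+1) ^ card P \<le> exp (lt / L^2)" .
      have "T powr (1 - 1 / L^2) = T / exp (lt / L^2)"
        using Tpos unfolding powr_def lt_def by (simp add: exp_diff algebra_simps)
      also have "\<dots> \<le> T / (2 * real (r*N+1) ^ card P)"
        using A Tpos R1pos by (intro divide_left_mono) auto
      finally show ?thesis .
    qed
    show "let y = ln T / (ln x * (ln (ln T)) ^ 8) in
        \<exists>S. S \<in> sets lebesgue \<and> S \<subseteq> {0..T} \<and>
            measure lebesgue S \<ge> T powr (1 - 1 / (ln (ln T))\<^sup>2) \<and>
            (\<forall>t\<in>S. norm ((\<Sum>n\<in>{n. real n \<le> x \<and> n \<in> smooth y}. nit n t)
                            - (\<Sum>n\<in>{n. real n \<le> x \<and> n \<in> smooth y}. f n))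
                     \<le> 2 * real (Psi x y) / (ln (ln T))\<^sup>2)"
      unfolding Let_def lt_def[symmetric] L_def[symmetric] l_def[symmetric] y_def[symmetric]
    proof (intro exI conjI ballI)
      show "G \<in> sets lebesgue" using Gl by (simp add: fmeasurableD)
      show "G \<subseteq> {0..T}" unfolding G_def by auto
      show "T powr (1 - 1 / L\<^sup>2) \<le> measure lebesgue G" using powr_b meas by linarith
      fix t assume tG: "t \<in> G"
      define A where "A = {n. real n \<le> x \<and> n \<in> smooth y}"
      have finA: "finite A" unfolding A_def
        by (rule finite_subset[of _ "{..nat \<lfloor>x\<rfloor>}"]) (auto intro: le_nat_floor)
      have each: "cmod (nit n t - f n) \<le> \<delta> * log 2 x" if n: "n \<in> A" for n
      proof -
        have n0: "n > 0" using n unfolding A_def smooth_def by auto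
        have "\<forall>p\<in>prime_factors n. cmod (nit p t - f p) \<le> \<delta>"
        proof
          fix p assume p: "p \<in> prime_factors n"
          have "p \<le> n" using p n0 by (auto intro: dvd_imp_le simp: in_prime_factors_iff)
          then have "real p \<le> real n" by simp
          then have "real p \<le> x" using n unfolding A_def by simp
          moreover have "real p \<le> y" using n p unfolding A_def smooth_def by auto
          moreover have "prime p" using p by auto
          ultimately have "p \<in> P" unfolding P_def by auto
          then show "cmod (nit p t - f p) \<le> \<delta>" using tG unfolding G_def by auto
        qed
        then have "cmod (nit n t - f n) \<le> \<delta> * log 2 (real n)"
          using err_bound[OF cm fu less_imp_le[OF dpos] n0] by blast
        also have "\<dots> \<le> \<delta> * log 2 x"
          using n n0 dpos unfolding A_def by (intro mult_left_mono) auto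
        finally show ?thesis .
      qed
      have "cmod ((\<Sum>n\<in>A. nit n t) - (\<Sum>n\<in>A. f n)) = cmod (\<Sum>n\<in>A. nit n t - f n)"
        by (simp add: sum_subtractf)
      also have "\<dots> \<le> (\<Sum>n\<in>A. cmod (nit n t - f n))" by (rule norm_sum)
      also have "\<dots> \<le> (\<Sum>n\<in>A. \<delta> * log 2 x)" using each by (intro sum_mono) auto
      also have "\<dots> = real (Psi x y) * (\<delta> * log 2 x)" unfolding Psi_def A_def by simp
      also have "\<dots> \<le> 2 * real (Psi x y) / L\<^sup>2"
      proof -
        have "\<delta> * log 2 x = 1 / (ln 2 * L^2)"
          unfolding \<delta>_def log_def l_def using x2 Lpos by (simp add: field_simps)
        also have "\<dots> \<le> 2 / L^2"
          using ln2_half Lpos by (simp add: field_simps)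
        finally have "\<delta> * log 2 x \<le> 2 / L^2" .
        then have "real (Psi x y) * (\<delta> * log 2 x) \<le> real (Psi x y) * (2 / L^2)"
          by (intro mult_left_mono) auto
        then show ?thesis by (simp add: mult.commute)
      qed
      finally show "cmod ((\<Sum>n\<in>A. nit n t) - (\<Sum>n\<in>A. f n)) \<le> 2 * real (Psi x y) / L\<^sup>2" .
    qed
  qed
qed


end
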